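(* Let $p$ range over primes and let $G$ be Catalan's constant. Then $$G=\frac{\pi^2}{8}\prod_{p\equiv3\ (\mathrm{mod}\ 4)}\frac{p^2-1}{p^2+1}=\frac1{16}\sum_{k=0}^\infty\frac{(-1)^k}{k!}\left[\gamma_k\!\left(\tfrac14\right)-\gamma_k\!\left(\tfrac34\right)\right],$$ and $$\prod_{p\equiv1\ (\mathrm{mod}\ 4)}\frac{p^2+1}{p^2-1}=\frac{12}{\pi^2}G=\frac{3}{4\pi^2}\sum_{k=0}^\infty\frac{(-1)^k}{k!}\left[\gamma_k\!\left(\tfrac14\right)-\gamma_k\!\left(\tfrac34\right)\right].$$
   Context: $G=\sum_{n\ge0}(-1)^n(2n+1)^{-2}$ is Catalan's constant. The Stieltjes constants $\gamma_k(a)$ are defined by the Laurent expansion of the Hurwitz zeta function at $s=1$: $\zeta(s,a)=\frac{1}{s-1}+\sum_{k\ge0}\frac{(-1)^k}{k!}\gamma_k(a)(s-1)^k$. *)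

theory Defs
  imports "HOL-Complex_Analysis.Complex_Analysis" "HOL-Computational_Algebra.Primes"
begin

definition catalan :: real where
  "catalan = (\<Sum>n. (-1) ^ n / (2 * real n + 1) ^ 2)"

text \<open>Hurwitz zeta function by its defining series (valid for Re s > 1, a > 0).\<close>
definition hurwitz_zeta_series :: "complex \<Rightarrow> real \<Rightarrow> complex" where
  "hurwitz_zeta_series s a = (\<Sum>n. complex_of_real (real n + a) powr (- s))"

definition hurwitz_zeta_regular :: "real \<Rightarrow> complex \<Rightarrow> complex" where
  "hurwitz_zeta_regular a = (THE g. g holomorphic_on UNIV \<and>
      (\<forall>s. 1 < Re s \<longrightarrow> g s = hurwitz_zeta_series s a - 1 / (s - 1)))"

text \<open>Stieltjes constants: zeta(s,a) = 1/(s-1) + sum_k (-1)^k/k! gamma_k(a) (s-1)^k,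
  i.e. gamma_k(a) = (-1)^k times the k-th derivative at 1 of the regular part.\<close>
definition stieltjes :: "nat \<Rightarrow> real \<Rightarrow> complex" where
  "stieltjes k a = (-1) ^ k * (deriv ^^ k) (hurwitz_zeta_regular a) 1"

end

theory Submission
  imports Defs "HOL-Real_Asymp.Real_Asymp"
begin

lemma norm_pw: "x \<ge> 0 \<Longrightarrow> norm (complex_of_real x powr s) = x powr Re s"
  by (subst norm_powr_real_powr) auto

lemma summable_pw_real:
  assumes "b > 0" "\<sigma> > 1"
  shows "summable (\<lambda>n. (real n + b) powr (-\<sigma>))"
proof (rule summable_comparison_test')
  show "summable (\<lambda>n. real n powr (-\<sigma>))" using assms by (subst summable_real_powr_iff) auto
  show "norm ((real n + b) powr (-\<sigma>)) \<le> real n powr (-\<sigma>)" if "n \<ge> 1" for n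
    using that assms by (auto intro!: powr_mono2')
qed

lemma summable_pw:
  assumes "b > 0" "Re s > 1"
  shows "summable (\<lambda>n. norm (complex_of_real (real n + b) powr (-s)))"
  using summable_pw_real[OF assms(1,2)] assms by (subst norm_pw) auto

lemma hz_bound:
  assumes "b \<ge> 1" "Re s \<ge> \<sigma>" "\<sigma> > 1"
  shows "norm (hurwitz_zeta_series s b) \<le> (\<Sum>n. (real n + b) powr (-\<sigma>))"
proof -
  have "norm (hurwitz_zeta_series s b) \<le> (\<Sum>n. norm (complex_of_real (real n + b) powr (-s)))"
    unfolding hurwitz_zeta_series_def using summable_pw[of b s] assms by (intro summable_norm) auto
  also have "\<dots> \<le> (\<Sum>n. (real n + b) powr (-\<sigma>))"
    using summable_pw[of b s] summable_pw_real[of b \<sigma>] assms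
  proof (intro suminf_le allI)
    fix n
    have "norm (complex_of_real (real n + b) powr (-s)) = (real n + b) powr (- Re s)"
      using assms by (subst norm_pw) auto
    also have "\<dots> \<le> (real n + b) powr (-\<sigma>)"
      using assms by (intro powr_mono) auto
    finally show "norm (complex_of_real (real n + b) powr (-s)) \<le> (real n + b) powr (-\<sigma>)" .
  qed (use summable_pw[of b s] summable_pw_real[of b \<sigma>] assms in auto)
  finally show ?thesis .
qed

lemma hz_holo:
  assumes "b \<ge> 1"
  shows "(\<lambda>s. hurwitz_zeta_series s b) holomorphic_on {s. Re s > 1}"
proof (rule holomorphic_uniform_sequence[where f = "\<lambda>N s. \<Sum>n<N. complex_of_real (real n + b) powr (-s)"])
  show "open {s. Re s > 1}" by (simp add: open_halfspace_Re_gt)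
  show "(\<lambda>s. \<Sum>n<N. complex_of_real (real n + b) powr (-s)) holomorphic_on {s. Re s > 1}" for N
    using assms by (intro holomorphic_intros) (auto simp del: of_real_add)
  fix x :: complex assume x: "x \<in> {s. Re s > 1}"
  define d where "d = (Re x - 1) / 2"
  have d: "d > 0" using x by (auto simp: d_def)
  have sub: "Re s \<ge> 1 + d" if "s \<in> cball x d" for s
  proof -
    have "\<bar>Re x - Re s\<bar> \<le> norm (x - s)" using abs_Re_le_cmod[of "x - s"] by simp
    with that have "Re x - Re s \<le> d" by (auto simp: dist_norm)
    thus ?thesis by (simp add: d_def field_simps)
  qed
  have "uniform_limit (cball x d) (\<lambda>N s. \<Sum>n<N. complex_of_real (real n + b) powr (-s))
          (\<lambda>s. \<Sum>n. complex_of_real (real n + b) powr (-s)) sequentially"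
  proof (rule Weierstrass_m_test)
    fix n s assume s: "s \<in> cball x d"
    have "norm (complex_of_real (real n + b) powr (-s)) = (real n + b) powr (- Re s)"
      using assms by (subst norm_pw) auto
    also have "\<dots> \<le> (real n + b) powr (-(1+d))"
      using assms sub[OF s] by (intro powr_mono) auto
    finally show "norm (complex_of_real (real n + b) powr (-s)) \<le> (real n + b) powr (-(1+d))" .
  next
    show "summable (\<lambda>n. (real n + b) powr (-(1+d)))" using d assms by (intro summable_pw_real) auto
  qed
  moreover have "cball x d \<subseteq> {s. Re s > 1}" using sub d by force
  ultimately show "\<exists>d>0. cball x d \<subseteq> {s. Re s > 1} \<and> uniform_limit (cball x d)
     (\<lambda>N s. \<Sum>n<N. complex_of_real (real n + b) powr (-s)) (\<lambda>s. hurwitz_zeta_series s b) sequentially"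
    using d unfolding hurwitz_zeta_series_def by blast
qed

lemma hz_bound2:
  assumes "b \<ge> 1" "Re s \<ge> 2"
  shows "norm (hurwitz_zeta_series s b) \<le> b powr (2 - Re s) * (\<Sum>n. (real n + b) powr (-2))"
proof -
  have "norm (hurwitz_zeta_series s b) \<le> (\<Sum>n. norm (complex_of_real (real n + b) powr (-s)))"
    unfolding hurwitz_zeta_series_def using summable_pw[of b s] assms by (intro summable_norm) auto
  also have "\<dots> \<le> (\<Sum>n. b powr (2 - Re s) * (real n + b) powr (-2))"
  proof (intro suminf_le allI)
    fix n
    have "norm (complex_of_real (real n + b) powr (-s)) = (real n + b) powr (- Re s)"
      using assms by (subst norm_pw) auto
    also have "\<dots> = (real n + b) powr (2 - Re s) * (real n + b) powr (-2)"
      by (subst powr_add[symmetric]) simp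
    also have "\<dots> \<le> b powr (2 - Re s) * (real n + b) powr (-2)"
      using assms by (intro mult_right_mono powr_mono2') auto
    finally show "norm (complex_of_real (real n + b) powr (-s)) \<le> b powr (2 - Re s) * (real n + b) powr (-2)" .
  qed (use summable_pw[of b s] summable_pw_real[of b 2] assms in \<open>auto intro: summable_mult\<close>)
  also have "\<dots> = b powr (2 - Re s) * (\<Sum>n. (real n + b) powr (-2))"
    using summable_pw_real[of b 2] assms by (intro suminf_mult) auto
  finally show ?thesis .
qed

lemma norm_gchoose_le:
  fixes z :: complex
  assumes "norm z \<le> \<rho>"
  shows "norm (z gchoose k) \<le> pochhammer \<rho> k / fact k"
proof -
  have "norm (z gchoose k) = norm (pochhammer (-z) k) / fact k"
    by (simp add: gbinomial_pochhammer norm_mult norm_divide norm_power)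
  also have "norm (pochhammer (-z) k) \<le> (\<Prod>i = 0..<k. norm (-z + of_nat i))"
    unfolding pochhammer_prod by (rule norm_prod_le)
  also have "\<dots> \<le> (\<Prod>i = 0..<k. \<rho> + of_nat i)"
  proof (intro prod_mono conjI)
    fix i assume "i \<in> {0..<k}"
    have "norm (-z + of_nat i) \<le> norm (-z) + norm (of_nat i :: complex)" by (rule norm_triangle_ineq)
    also have "\<dots> \<le> \<rho> + of_nat i" using assms by simp
    finally show "norm (-z + of_nat i) \<le> \<rho> + of_nat i" .
  qed auto
  also have "\<dots> = pochhammer \<rho> k" by (simp add: pochhammer_prod)
  finally show ?thesis by (simp add: divide_right_mono)
qed

lemma summable_poch:
  fixes \<rho> q :: real
  assumes "0 \<le> q" "q < 1"
  shows "summable (\<lambda>k. pochhammer \<rho> k / fact k * q ^ k)"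
proof -
  have "(\<lambda>k. ((-\<rho>) gchoose k) * (-q) ^ k) sums (1 + (-q)) powr (-\<rho>)"
    using assms by (intro gen_binomial_real) auto
  also have "(\<lambda>k. ((-\<rho>) gchoose k) * (-q) ^ k) = (\<lambda>k. pochhammer \<rho> k / fact k * q ^ k)"
    by (auto simp: gbinomial_pochhammer power_mult_distrib[symmetric] fun_eq_iff)
  finally show ?thesis by (rule sums_summable)
qed

definition pw :: "real \<Rightarrow> complex \<Rightarrow> complex" where
  "pw x w = complex_of_real x powr w"

lemma norm_pw': "x \<ge> 0 \<Longrightarrow> norm (pw x w) = x powr Re w"
  unfolding pw_def by (rule norm_pw)

lemma pw_add: "x > 0 \<Longrightarrow> pw x (v + w) = pw x v * pw x w"
  unfolding pw_def by (simp add: powr_add)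

lemma hz_pw: "hurwitz_zeta_series s b = (\<Sum>n. pw (real n + b) (-s))"
  unfolding hurwitz_zeta_series_def pw_def ..

lemma hz_identity:
  assumes b: "b > 1" and s: "Re s > 1"
  shows "(\<lambda>j. ((-s) gchoose (j+1)) / of_nat (j+2) * hurwitz_zeta_series (s + of_nat (j+1)) b)
          sums (pw b (1-s) / (s-1) - hurwitz_zeta_series s b)"
proof -
  define Fc where "Fc n k = ((1-s) gchoose (k+1)) * pw (real n + b) (-s - of_nat k)" for n k :: nat
  define D where "D n = pw (real n + b) (1-s)" for n :: nat
  define \<rho> where "\<rho> = norm (1 - s)"
  define q where "q = 1 / b"
  have q: "0 < q" "q < 1" using b by (auto simp: q_def)
  define u where "u k = pochhammer \<rho> (k+1) / fact (k+1) * q ^ k" for k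
  define v where "v n = (real n + b) powr (- Re s)" for n :: nat
  have u_nn: "u k \<ge> 0" for k unfolding u_def \<rho>_def using q s
    by (intro mult_nonneg_nonneg divide_nonneg_pos pochhammer_nonneg) auto
  have pn: "pochhammer \<rho> k / fact k \<ge> 0" for k
    unfolding \<rho>_def using s by (intro divide_nonneg_pos pochhammer_nonneg) auto
  have v_nn: "v n \<ge> 0" for n unfolding v_def by simp
  have su: "summable u"
  proof -
    have "summable (\<lambda>k. pochhammer \<rho> (Suc k) / fact (Suc k) * q ^ (Suc k))"
      using summable_poch[OF less_imp_le[OF q(1)] q(2), of \<rho>] by (subst summable_Suc_iff)
    hence "summable (\<lambda>k. (1/q) * (pochhammer \<rho> (Suc k) / fact (Suc k) * q ^ (Suc k)))"
      by (rule summable_mult)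
    also have "(\<lambda>k. (1/q) * (pochhammer \<rho> (Suc k) / fact (Suc k) * q ^ (Suc k))) = u"
      using q by (auto simp: u_def fun_eq_iff)
    finally show ?thesis .
  qed
  have sv: "summable v" unfolding v_def using s b by (intro summable_pw_real) auto
  have bound: "norm (Fc n k) \<le> v n * u k" for n k
  proof -
    have "norm (Fc n k) = norm ((1-s) gchoose (k+1)) * ((real n + b) powr (- Re s) * (real n + b) powr (- real k))"
      unfolding Fc_def using b by (simp add: norm_mult norm_pw' powr_add[symmetric])
    also have "\<dots> \<le> (pochhammer \<rho> (k+1) / fact (k+1)) * ((real n + b) powr (- Re s) * q ^ k)"
    proof (intro mult_mono mult_left_mono)
      show "norm ((1-s) gchoose (k+1)) \<le> pochhammer \<rho> (k+1) / fact (k+1)"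
        by (rule norm_gchoose_le) (simp add: \<rho>_def)
      have "(real n + b) powr (- real k) \<le> b powr (- real k)"
        using b by (intro powr_mono2') auto
      also have "\<dots> = q ^ k" using b by (simp add: q_def powr_minus powr_realpow divide_inverse power_inverse)
      finally show "(real n + b) powr (- real k) \<le> q ^ k" .
    qed (use pn[of "k+1"] in auto)
    also have "\<dots> = v n * u k" by (simp add: u_def v_def)
    finally show ?thesis .
  qed
  have normsum_k: "summable (\<lambda>k. norm (Fc n k))" for n
    by (rule summable_comparison_test'[OF summable_mult[OF su, of "v n"]]) (use bound in auto)
  have sum_k: "(\<lambda>k. Fc n k) sums (D (Suc n) - D n)" for n
  proof -
    have "(\<lambda>k. ((1-s) gchoose k) * complex_of_real (real n + b) powr ((1-s) - of_nat k) * complex_of_real 1 ^ k)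
           sums complex_of_real (real n + b + 1) powr (1-s)"
      using b gen_binomial_complex''[of 1 "real n + b" "1-s"] by simp
    hence "(\<lambda>k. ((1-s) gchoose k) * pw (real n + b) ((1-s) - of_nat k)) sums D (Suc n)"
      by (simp add: pw_def D_def add_ac)
    hence "(\<lambda>k. ((1-s) gchoose (Suc k)) * pw (real n + b) ((1-s) - of_nat (Suc k))) sums (D (Suc n) - D n)"
      by (subst sums_Suc_iff) (simp add: D_def)
    thus ?thesis by (simp add: Fc_def algebra_simps)
  qed
  have sum_n: "(\<lambda>n. Fc n k) sums (((1-s) gchoose (k+1)) * hurwitz_zeta_series (s + of_nat k) b)" for k
  proof -
    have "summable (\<lambda>n. norm (complex_of_real (real n + b) powr (-(s + of_nat k))))"
      using b s by (intro summable_pw) auto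
    hence "summable (\<lambda>n. pw (real n + b) (-(s + of_nat k)))"
      unfolding pw_def by (rule summable_norm_cancel)
    hence "(\<lambda>n. pw (real n + b) (-(s + of_nat k))) sums hurwitz_zeta_series (s + of_nat k) b"
      by (simp add: hz_pw summable_sums)
    hence "(\<lambda>n. ((1-s) gchoose (k+1)) * pw (real n + b) (-(s + of_nat k))) sums (((1-s) gchoose (k+1)) * hurwitz_zeta_series (s + of_nat k) b)"
      by (rule sums_mult)
    thus ?thesis by (simp add: Fc_def algebra_simps)
  qed
  have sprod: "(\<lambda>(n,k). v n * u k) summable_on UNIV \<times> UNIV"
  proof (rule summable_on_SigmaI[where g = "\<lambda>n. v n * suminf u"])
    show "((\<lambda>k. (\<lambda>(n,k). v n * u k) (n, k)) has_sum v n * suminf u) UNIV" for n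
      using sums_mult[OF summable_sums[OF su], of "v n"] u_nn v_nn
      by (auto intro!: sums_nonneg_imp_has_sum)
    show "(\<lambda>n. v n * suminf u) summable_on UNIV"
      using sv u_nn v_nn by (intro summable_nonneg_imp_summable_on summable_mult2 mult_nonneg_nonneg suminf_nonneg su) auto
  qed (use u_nn v_nn in auto)
  have sFc: "(\<lambda>(n,k). Fc n k) summable_on UNIV \<times> UNIV"
    by (rule abs_summable_summable, rule Infinite_Sum.abs_summable_on_comparison_test'[OF sprod]) (use bound in auto)
  have D0: "D \<longlonglongrightarrow> 0"
  proof (rule tendsto_norm_zero_cancel)
    have "(\<lambda>n. (real n + b) powr (1 - Re s)) \<longlonglongrightarrow> 0"
    proof (rule tendsto_neg_powr)
      show "filterlim (\<lambda>n. real n + b) at_top sequentially"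
        by (subst add.commute, rule filterlim_tendsto_add_at_top[OF tendsto_const filterlim_real_sequentially])
    qed (use s in auto)
    thus "(\<lambda>n. norm (D n)) \<longlonglongrightarrow> 0"
      using b by (simp add: D_def norm_pw')
  qed
  have tel: "(\<lambda>n. D (Suc n) - D n) sums (0 - D 0)" by (rule telescope_sums[OF D0])
  have eq1: "(\<Sum>\<^sub>\<infinity>n. infsum (Fc n) UNIV) = - D 0"
  proof -
    have "infsum (Fc n) UNIV = D (Suc n) - D n" for n
      using norm_summable_imp_has_sum[OF normsum_k sum_k] by (simp add: has_sum_iff)
    hence "(\<lambda>n. infsum (Fc n) UNIV) = (\<lambda>n. D (Suc n) - D n)" by auto
    moreover have "(\<lambda>n. infsum (Fc n) UNIV) summable_on UNIV"
      using summable_on_Sigma_banach[of Fc UNIV "\<lambda>_. UNIV"] sFc by simp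
    ultimately have "(\<lambda>n. D (Suc n) - D n) sums (\<Sum>\<^sub>\<infinity>n. infsum (Fc n) UNIV)"
      by (metis has_sum_imp_sums has_sum_infsum)
    with tel show ?thesis by (simp add: sums_unique2)
  qed
  define G where "G k = ((1-s) gchoose (k+1)) * hurwitz_zeta_series (s + of_nat k) b" for k
  have eq2: "(\<Sum>\<^sub>\<infinity>n. infsum (Fc n) UNIV) = (\<Sum>\<^sub>\<infinity>k. \<Sum>\<^sub>\<infinity>n. Fc n k)"
    by (rule infsum_swap_banach[OF sFc])
  have inner: "(\<Sum>\<^sub>\<infinity>n. Fc n k) = G k" for k
  proof -
    have "summable (\<lambda>n. norm (Fc n k))"
      by (rule summable_comparison_test'[OF summable_mult2[OF sv, of "u k"]]) (use bound in auto)
    from norm_summable_imp_has_sum[OF this sum_n] show ?thesis by (simp add: has_sum_iff G_def)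
  qed
  have "G summable_on UNIV"
  proof -
    have "(\<lambda>(k,n). Fc n k) summable_on UNIV \<times> UNIV"
      using sFc by (subst (asm) summable_on_swap) simp
    from summable_on_Sigma_banach[of "\<lambda>k n. Fc n k" UNIV "\<lambda>_. UNIV"] this show ?thesis
      using inner by simp
  qed
  hence "G sums (\<Sum>\<^sub>\<infinity>k. G k)" by (metis has_sum_imp_sums has_sum_infsum)
  hence Gs: "G sums (- D 0)" using eq1 eq2 inner by simp
  hence "(\<lambda>j. G (Suc j)) sums (- D 0 - G 0)" by (subst sums_Suc_iff) simp
  hence "(\<lambda>j. (1 / (1 - s)) * G (Suc j)) sums ((1 / (1 - s)) * (- D 0 - G 0))" by (rule sums_mult)
  moreover have "s \<noteq> 1" using s by auto
  moreover have "(1 / (1 - s)) * G (Suc j) = ((-s) gchoose (j+1)) / of_nat (j+2) * hurwitz_zeta_series (s + of_nat (j+1)) b" for j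
  proof -
    have "of_nat (Suc (Suc j)) * ((1-s) gchoose Suc (Suc j)) = (1-s) * ((-s) gchoose (Suc j))"
      using gbinomial_absorption[of "Suc j" "1-s"] by simp
    hence eq: "((1-s) gchoose Suc (Suc j)) = (1-s) * (((-s) gchoose (Suc j)) / of_nat (Suc (Suc j)))"
      by (simp add: field_simps del: of_nat_Suc)
    have ne: "1 - s \<noteq> 0" using \<open>s \<noteq> 1\<close> by simp
    have "(1 / (1 - s)) * G (Suc j) = (1 / (1 - s)) * (1-s) * (((-s) gchoose (Suc j)) / of_nat (Suc (Suc j))) * hurwitz_zeta_series (s + of_nat (Suc j)) b"
      by (simp only: G_def Suc_eq_plus1[symmetric] eq) (simp add: mult_ac)
    also have "(1 / (1 - s)) * (1-s) = 1" using ne by simp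
    finally show ?thesis by (simp add: add_ac)
  qed
  moreover have "(1 / (1 - s)) * (- D 0 - G 0) = pw b (1-s) / (s-1) - hurwitz_zeta_series s b"
    using \<open>s \<noteq> 1\<close> by (simp add: G_def D_def field_simps)
  ultimately show ?thesis by simp
qed

lemma gchoose_Suc_rec: "(a::complex) gchoose Suc k = (a gchoose k) * (a - of_nat k) / of_nat (Suc k)"
  by (simp add: gbinomial_pochhammer pochhammer_Suc field_simps)

lemma holomorphic_gchoose [holomorphic_intros]:
  assumes "f holomorphic_on A"
  shows "(\<lambda>s. f s gchoose k) holomorphic_on A"
  unfolding gbinomial_altdef_of_nat using assms
  by (intro holomorphic_on_prod holomorphic_intros) auto

definition Eb :: "real \<Rightarrow> complex \<Rightarrow> complex" where
  "Eb b s = (if s = 1 then - of_real (ln b) else (pw b (1-s) - 1) / (s - 1))"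

lemma Eb_holo:
  assumes "b > 0"
  shows "Eb b holomorphic_on UNIV"
proof (rule no_isolated_singularity'[where K = "{1}"])
  have d: "((\<lambda>s. pw b (1-s)) has_field_derivative (- of_real (ln b))) (at 1)"
  proof -
    have "((\<lambda>s. complex_of_real b powr (1-s)) has_field_derivative (Ln (of_real b) * of_real b powr (1-1)) * (-1)) (at 1)"
      by (rule DERIV_chain'[where f = "\<lambda>s. 1 - s"]) (auto intro!: derivative_eq_intros has_field_derivative_powr_right simp: assms)
    thus ?thesis using assms by (simp add: pw_def Ln_of_real)
  qed
  hence "((\<lambda>y. (pw b (1-y) - pw b (1-1)) / (y - 1)) \<longlongrightarrow> - of_real (ln b)) (at 1)"
    by (simp add: has_field_derivative_iff)
  hence "((\<lambda>y. (pw b (1-y) - 1) / (y - 1)) \<longlongrightarrow> - of_real (ln b)) (at 1)"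
    using assms by (simp add: pw_def)
  hence "(Eb b \<longlongrightarrow> - of_real (ln b)) (at 1)"
    by (rule Lim_transform_eventually) (auto simp: Eb_def eventually_at_filter)
  hence "(Eb b \<longlongrightarrow> Eb b 1) (at 1)" by (simp add: Eb_def)
  thus "\<And>z. z \<in> {1} \<Longrightarrow> (Eb b \<longlongrightarrow> Eb b z) (at z within UNIV)" by simp
  show "Eb b holomorphic_on UNIV - {1}"
  proof (rule holomorphic_transform[where f = "\<lambda>s. (pw b (1-s) - 1) / (s - 1)"])
    show "(\<lambda>s. (pw b (1-s) - 1) / (s - 1)) holomorphic_on UNIV - {1}"
      unfolding pw_def using assms by (intro holomorphic_intros) auto
  qed (auto simp: Eb_def)
qed auto

definition Hm :: "nat \<Rightarrow> complex set" where "Hm m = {s. Re s > 1 - real m}"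

lemma open_Hm: "open (Hm m)" unfolding Hm_def by (simp add: open_halfspace_Re_gt)
lemma connected_Hm: "connected (Hm m)" unfolding Hm_def by (intro convex_connected convex_halfspace_Re_gt)

definition Tg :: "(complex \<Rightarrow> complex) \<Rightarrow> nat \<Rightarrow> complex \<Rightarrow> complex" where
  "Tg g j s = ((-s) gchoose (j+1)) / of_nat (j+2) * g (s + of_nat (j+1))
              - ((-s) gchoose j) / (of_nat (j+1) * of_nat (j+2))"

lemma Tg_eq:
  assumes "g (s + of_nat (j+1)) = hurwitz_zeta_series (s + of_nat (j+1)) b - 1 / (s + of_nat (j+1) - 1)"
      and "s + of_nat j \<noteq> 0"
  shows "Tg g j s = ((-s) gchoose (j+1)) / of_nat (j+2) * hurwitz_zeta_series (s + of_nat (j+1)) b"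
proof -
  have rec: "(-s) gchoose (j+1) = ((-s) gchoose j) * (-s - of_nat j) / of_nat (Suc j)"
    using gchoose_Suc_rec[of "-s" j] by simp
  have "((-s) gchoose (j+1)) / of_nat (j+2) * (1 / (s + of_nat (j+1) - 1))
        = - ((-s) gchoose j) / (of_nat (j+1) * of_nat (j+2))"
  proof -
    have e1: "s + of_nat (j+1) - 1 = s + of_nat j" by simp
    have e2: "(-s - of_nat j) / (s + of_nat j) = -1" using assms(2)
      by (simp add: field_simps)
    have "((-s) gchoose (j+1)) / of_nat (j+2) * (1 / (s + of_nat (j+1) - 1))
          = ((-s) gchoose j) * ((-s - of_nat j) / (s + of_nat j)) / (of_nat (j+1) * of_nat (j+2))"
      unfolding rec e1 by (simp add: field_simps del: of_nat_Suc of_nat_add)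
    also have "\<dots> = - ((-s) gchoose j) / (of_nat (j+1) * of_nat (j+2))" unfolding e2 by simp
    finally show ?thesis .
  qed
  thus ?thesis unfolding Tg_def assms(1) by (simp add: algebra_simps)
qed

lemma summable_poch_shift:
  fixes \<rho> q :: real
  assumes "0 < q" "q < 1"
  shows "summable (\<lambda>k. pochhammer \<rho> (k+1) / fact (k+1) * q ^ k)"
proof -
  have "summable (\<lambda>k. pochhammer \<rho> (Suc k) / fact (Suc k) * q ^ (Suc k))"
    using summable_poch[OF less_imp_le[OF assms(1)] assms(2), of \<rho>] by (subst summable_Suc_iff)
  hence "summable (\<lambda>k. (1/q) * (pochhammer \<rho> (Suc k) / fact (Suc k) * q ^ (Suc k)))"
    by (rule summable_mult)
  also have "(\<lambda>k. (1/q) * (pochhammer \<rho> (Suc k) / fact (Suc k) * q ^ (Suc k))) = (\<lambda>k. pochhammer \<rho> (k+1) / fact (k+1) * q ^ k)"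
    using assms by (auto simp: fun_eq_iff)
  finally show ?thesis .
qed

lemma div_le_self_real:
  assumes "x \<ge> 0" "(c::real) \<ge> 1" shows "x / c \<le> x"
proof -
  have "x * 1 \<le> x * c" using assms by (intro mult_left_mono) auto
  thus ?thesis using assms by (simp add: divide_le_eq)
qed

lemma hz_step:
  assumes b: "b > 1" and g: "g holomorphic_on Hm m"
      and geq: "\<And>s. Re s > 1 \<Longrightarrow> g s = hurwitz_zeta_series s b - 1 / (s - 1)"
  shows "\<exists>g'. g' holomorphic_on Hm (Suc m) \<and> (\<forall>s. Re s > 1 \<longrightarrow> g' s = hurwitz_zeta_series s b - 1 / (s - 1))"
proof (intro exI conjI allI impI)
  define g' where "g' s = Eb b s - (\<Sum>j. Tg g j s)" for s
  define q where "q = 1 / b"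
  have q: "0 < q" "q < 1" using b by (auto simp: q_def)
  define K where "K = (\<Sum>n. (real n + b) powr (-2))"
  have K: "K \<ge> 0" unfolding K_def using b
    by (intro suminf_nonneg summable_pw_real) auto
  {
    fix s :: complex assume s: "Re s > 1"
    have "Tg g j s = ((-s) gchoose (j+1)) / of_nat (j+2) * hurwitz_zeta_series (s + of_nat (j+1)) b" for j
    proof (rule Tg_eq)
      show "g (s + of_nat (j + 1)) = hurwitz_zeta_series (s + of_nat (j + 1)) b - 1 / (s + of_nat (j + 1) - 1)"
        using s by (intro geq) auto
      show "s + of_nat j \<noteq> 0" using s by (auto simp: complex_eq_iff)
    qed
    hence "(\<lambda>j. Tg g j s) sums (pw b (1-s) / (s-1) - hurwitz_zeta_series s b)"
      using hz_identity[OF b s] by simp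
    hence "(\<Sum>j. Tg g j s) = pw b (1-s) / (s-1) - hurwitz_zeta_series s b" by (rule sums_unique[symmetric])
    moreover have "s \<noteq> 1" using s by auto
    ultimately show "g' s = hurwitz_zeta_series s b - 1 / (s - 1)"
      by (simp add: g'_def Eb_def diff_divide_distrib)
  }
  have hT: "(\<lambda>s. \<Sum>j. Tg g j s) holomorphic_on Hm (Suc m)"
  proof (rule holomorphic_uniform_sequence[where f = "\<lambda>N s. \<Sum>j<N. Tg g j s"])
    show "open (Hm (Suc m))" by (rule open_Hm)
    show "(\<lambda>s. \<Sum>j<N. Tg g j s) holomorphic_on Hm (Suc m)" for N
    proof (intro holomorphic_on_sum)
      fix j assume "j \<in> {..<N}"
      have im: "(\<lambda>s. s + of_nat (j+1)) ` Hm (Suc m) \<subseteq> Hm m" by (auto simp: Hm_def)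
      have "(\<lambda>s. s + of_nat (j+1)) holomorphic_on Hm (Suc m)" by (intro holomorphic_intros)
      from holomorphic_on_compose_gen[OF this g im]
      have "(\<lambda>s. g (s + of_nat (j+1))) holomorphic_on Hm (Suc m)" by (simp add: o_def)
      thus "Tg g j holomorphic_on Hm (Suc m)"
        unfolding Tg_def by (intro holomorphic_intros) auto
    qed
    fix x assume x: "x \<in> Hm (Suc m)"
    define d where "d = (Re x + real m) / 2"
    have d: "d > 0" using x by (auto simp: Hm_def d_def)
    define \<rho> where "\<rho> = norm x + d"
    have rho_pos: "\<rho> > 0" using d by (simp add: \<rho>_def add_nonneg_pos)
    have sub: "Re s \<ge> Re x - d" "norm s \<le> \<rho>" if "s \<in> cball x d" for s
    proof -
      have "\<bar>Re x - Re s\<bar> \<le> norm (x - s)" using abs_Re_le_cmod[of "x - s"] by simp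
      with that show "Re s \<ge> Re x - d" by (auto simp: dist_norm)
      have "norm s \<le> norm x + norm (s - x)" by (metis add.commute norm_triangle_sub)
      with that show "norm s \<le> \<rho>" by (auto simp: \<rho>_def dist_norm norm_minus_commute)
    qed
    have csub: "cball x d \<subseteq> Hm (Suc m)"
    proof
      fix s assume "s \<in> cball x d"
      from sub(1)[OF this] x show "s \<in> Hm (Suc m)" by (simp add: Hm_def d_def field_simps)
    qed
    have "uniform_limit (cball x d) (\<lambda>N s. \<Sum>j<N. Tg g j s) (\<lambda>s. \<Sum>j. Tg g j s) sequentially"
    proof (rule Weierstrass_m_test_ev)
      show "summable (\<lambda>j. pochhammer \<rho> (j+1) / fact (j+1) * q ^ j * (b powr (1 + \<rho>) * K))"
        by (intro summable_mult2 summable_poch_shift q)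
      have "\<forall>j\<ge>nat \<lceil>\<rho>\<rceil> + 2. \<forall>s\<in>cball x d. norm (Tg g j s) \<le> pochhammer \<rho> (j+1) / fact (j+1) * q ^ j * (b powr (1 + \<rho>) * K)"
      proof (intro allI impI ballI)
        fix j s assume j: "j \<ge> nat \<lceil>\<rho>\<rceil> + 2" and s: "s \<in> cball x d"
        have rs: "- Re s \<le> \<rho>" using sub(2)[OF s] abs_Re_le_cmod[of s] by linarith
        have "\<rho> \<le> real (nat \<lceil>\<rho>\<rceil>)" by linarith
        hence jr: "real j \<ge> \<rho> + 2" using j by linarith
        have re: "Re (s + of_nat (j+1)) \<ge> 2" using rs jr by simp
        have "Tg g j s = ((-s) gchoose (j+1)) / of_nat (j+2) * hurwitz_zeta_series (s + of_nat (j+1)) b"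
        proof (rule Tg_eq)
          show "g (s + of_nat (j + 1)) = hurwitz_zeta_series (s + of_nat (j + 1)) b - 1 / (s + of_nat (j + 1) - 1)"
            using re by (intro geq) auto
          show "s + of_nat j \<noteq> 0" using re by (auto simp: complex_eq_iff)
        qed
        hence "norm (Tg g j s) = norm ((-s) gchoose (j+1)) / real (j+2) * norm (hurwitz_zeta_series (s + of_nat (j+1)) b)"
          by (simp only: norm_mult norm_divide norm_of_nat)
        also have "\<dots> \<le> norm ((-s) gchoose (j+1)) * norm (hurwitz_zeta_series (s + of_nat (j+1)) b)"
          by (intro mult_right_mono div_le_self_real) auto
        also have "\<dots> \<le> (pochhammer \<rho> (j+1) / fact (j+1)) * (b powr (2 - Re (s + of_nat (j+1))) * K)"
        proof (intro mult_mono)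
          show "norm ((-s) gchoose (j+1)) \<le> pochhammer \<rho> (j+1) / fact (j+1)"
            using sub(2)[OF s] by (intro norm_gchoose_le) simp
          show "norm (hurwitz_zeta_series (s + of_nat (j+1)) b) \<le> b powr (2 - Re (s + of_nat (j+1))) * K"
            unfolding K_def using b re by (intro hz_bound2) auto
        qed (use K rho_pos in \<open>auto intro!: divide_nonneg_pos pochhammer_nonneg\<close>)
        also have "\<dots> \<le> (pochhammer \<rho> (j+1) / fact (j+1)) * ((b powr (1 + \<rho>) * q ^ j) * K)"
        proof -
          have "b powr (2 - Re (s + of_nat (j+1))) \<le> b powr ((1 + \<rho>) - real j)"
            using b rs by (intro powr_mono) auto
          also have "b powr ((1 + \<rho>) - real j) = b powr (1 + \<rho>) * q ^ j"
            using b by (simp add: powr_diff q_def powr_realpow power_divide)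
          finally have bp: "b powr (2 - Re (s + of_nat (j+1))) \<le> b powr (1 + \<rho>) * q ^ j" .
          show ?thesis
            by (intro mult_left_mono mult_right_mono bp) (use K rho_pos in \<open>auto intro!: divide_nonneg_pos pochhammer_nonneg\<close>)
        qed
        finally show "norm (Tg g j s) \<le> pochhammer \<rho> (j+1) / fact (j+1) * q ^ j * (b powr (1 + \<rho>) * K)"
          by (simp add: mult_ac)
      qed
      thus "\<forall>\<^sub>F j in sequentially. \<forall>s\<in>cball x d. norm (Tg g j s) \<le> pochhammer \<rho> (j+1) / fact (j+1) * q ^ j * (b powr (1 + \<rho>) * K)"
        unfolding eventually_sequentially by blast
    qed
    with d csub show "\<exists>d>0. cball x d \<subseteq> Hm (Suc m) \<and> uniform_limit (cball x d) (\<lambda>N s. \<Sum>j<N. Tg g j s) (\<lambda>s. \<Sum>j. Tg g j s) sequentially"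
      by blast
  qed
  have hE: "Eb b holomorphic_on Hm (Suc m)"
    using Eb_holo[of b] b by (auto intro: holomorphic_on_subset)
  show "g' holomorphic_on Hm (Suc m)"
    unfolding g'_def by (intro holomorphic_on_diff hE hT)
qed

lemma hz_cont_b:
  assumes b: "b > 1"
  shows "\<exists>g. g holomorphic_on UNIV \<and> (\<forall>s. Re s > 1 \<longrightarrow> g s = hurwitz_zeta_series s b - 1 / (s - 1))"
proof -
  have ex: "\<exists>g. g holomorphic_on Hm m \<and> (\<forall>s. Re s > 1 \<longrightarrow> g s = hurwitz_zeta_series s b - 1 / (s - 1))" for m
  proof (induction m)
    case 0
    have "(\<lambda>s. hurwitz_zeta_series s b - 1 / (s - 1)) holomorphic_on {s. Re s > 1}"
      using hz_holo[of b] b by (intro holomorphic_intros) auto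
    thus ?case by (auto simp: Hm_def)
  next
    case (Suc m)
    then obtain g where g1: "g holomorphic_on Hm m" and g2: "\<And>s. Re s > 1 \<Longrightarrow> g s = hurwitz_zeta_series s b - 1 / (s - 1)"
      by blast
    from hz_step[OF b g1 g2] show ?case .
  qed
  then obtain gs where gs: "\<And>m. gs m holomorphic_on Hm m"
      "\<And>m s. Re s > 1 \<Longrightarrow> gs m s = hurwitz_zeta_series s b - 1 / (s - 1)"
    by metis
  have agree: "gs m s = gs m' s" if "s \<in> Hm m" "s \<in> Hm m'" for m m' s
  proof (rule analytic_continuation_open[of "{s. Re s > 1}" "Hm (min m m')" "gs m" "gs m'" s])
    show "open {s. Re s > 1}" by (simp add: open_halfspace_Re_gt)
    show "open (Hm (min m m'))" by (rule open_Hm)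
    show "{s. Re s > 1} \<noteq> {}" by (auto intro!: exI[of _ 2])
    show "connected (Hm (min m m'))" by (rule connected_Hm)
    show "{s. Re s > 1} \<subseteq> Hm (min m m')" by (auto simp: Hm_def)
    show "gs m holomorphic_on Hm (min m m')"
      by (rule holomorphic_on_subset[OF gs(1)]) (auto simp: Hm_def)
    show "gs m' holomorphic_on Hm (min m m')"
      by (rule holomorphic_on_subset[OF gs(1)]) (auto simp: Hm_def)
    show "s \<in> Hm (min m m')" using that by (auto simp: Hm_def min_def)
    show "gs m z = gs m' z" if "z \<in> {s. Re s > 1}" for z using that gs(2) by simp
  qed
  define M where "M s = nat \<lceil>- Re s\<rceil> + 2" for s
  have inM: "s \<in> Hm (M s)" for s
  proof -
    have "- Re s \<le> real (nat \<lceil>- Re s\<rceil>)" by linarith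
    thus ?thesis by (simp add: Hm_def M_def)
  qed
  define ge where "ge s = gs (M s) s" for s
  have ge_eq: "ge s = gs m s" if "s \<in> Hm m" for s m
    unfolding ge_def using agree[OF inM that] .
  have "ge holomorphic_on UNIV"
  proof -
    have "\<forall>x\<in>UNIV. \<exists>f'. (ge has_field_derivative f') (at x)"
    proof
    fix x :: complex assume "x \<in> UNIV"
    from gs(1)[of "M x"] open_Hm[of "M x"] inM[of x]
    obtain f' where "(gs (M x) has_field_derivative f') (at x)"
      by (auto simp: holomorphic_on_open)
    hence "(ge has_field_derivative f') (at x)"
      by (rule has_field_derivative_transform_within_open[OF _ open_Hm inM]) (simp add: ge_eq)
    thus "\<exists>f'. (ge has_field_derivative f') (at x)" by blast
    qed
    thus ?thesis by (simp add: holomorphic_on_open)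
  qed
  moreover have "ge s = hurwitz_zeta_series s b - 1 / (s - 1)" if "Re s > 1" for s
    using ge_eq[of s 0] gs(2)[OF that] that by (simp add: Hm_def)
  ultimately show ?thesis by blast
qed

lemma hz_shift:
  assumes a: "a > 0" and s: "Re s > 1"
  shows "hurwitz_zeta_series s a = pw a (-s) + hurwitz_zeta_series s (a + 1)"
proof -
  have sm: "summable (\<lambda>n. pw (real n + a) (-s))"
    using summable_pw[OF a s] unfolding pw_def by (rule summable_norm_cancel)
  have "(\<Sum>n. pw (real (Suc n) + a) (-s)) = (\<Sum>n. pw (real n + a) (-s)) - pw (real 0 + a) (-s)"
    by (rule suminf_split_head[OF sm])
  moreover have "(\<lambda>n. pw (real (Suc n) + a) (-s)) = (\<lambda>n. pw (real n + (a + 1)) (-s))"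
    by (auto simp: add_ac)
  ultimately show ?thesis by (simp add: hz_pw)
qed

lemma hz_cont:
  assumes a: "a > 0"
  shows "\<exists>g. g holomorphic_on UNIV \<and> (\<forall>s. Re s > 1 \<longrightarrow> g s = hurwitz_zeta_series s a - 1 / (s - 1))"
proof -
  obtain g where g: "g holomorphic_on UNIV" "\<And>s. Re s > 1 \<Longrightarrow> g s = hurwitz_zeta_series s (a+1) - 1 / (s - 1)"
    using hz_cont_b[of "a+1"] a by auto
  show ?thesis
  proof (intro exI conjI allI impI)
    show "(\<lambda>s. pw a (-s) + g s) holomorphic_on UNIV"
      unfolding pw_def using a g(1) by (intro holomorphic_intros) auto
    fix s :: complex assume "Re s > 1"
    thus "pw a (-s) + g s = hurwitz_zeta_series s a - 1 / (s - 1)"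
      using hz_shift[OF a, of s] g(2)[of s] by simp
  qed
qed

lemma entire_unique:
  assumes "f holomorphic_on UNIV" "g holomorphic_on UNIV" "\<And>s. Re s > 1 \<Longrightarrow> f s = g s"
  shows "f = g"
proof
  fix z
  show "f z = g z"
  proof (rule analytic_continuation_open[of "{s. Re s > 1}" UNIV f g z])
    show "open {s. Re s > 1}" by (simp add: open_halfspace_Re_gt)
    show "{s. Re s > 1} \<noteq> {}" by (auto intro!: exI[of _ 2])
  qed (use assms in auto)
qed

lemma hzr:
  assumes a: "a > 0"
  shows "hurwitz_zeta_regular a holomorphic_on UNIV"
    and "\<And>s. Re s > 1 \<Longrightarrow> hurwitz_zeta_regular a s = hurwitz_zeta_series s a - 1 / (s - 1)"
proof -
  let ?P = "\<lambda>g. g holomorphic_on UNIV \<and> (\<forall>s. 1 < Re s \<longrightarrow> g s = hurwitz_zeta_series s a - 1 / (s - 1))"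
  have "\<exists>!g. ?P g"
  proof (rule ex_ex1I)
    show "\<exists>g. ?P g" using hz_cont[OF a] .
    show "g1 = g2" if "?P g1" "?P g2" for g1 g2
      using that by (intro entire_unique) auto
  qed
  hence "?P (hurwitz_zeta_regular a)"
    unfolding hurwitz_zeta_regular_def by (rule theI')
  thus "hurwitz_zeta_regular a holomorphic_on UNIV"
    "\<And>s. Re s > 1 \<Longrightarrow> hurwitz_zeta_regular a s = hurwitz_zeta_series s a - 1 / (s - 1)" by auto
qed

lemma catalan_sums: "(\<lambda>n. (-1) ^ n / (2 * real n + 1) ^ 2) sums catalan"
proof -
  have "summable (\<lambda>n. (-1) ^ n / (2 * real n + 1) ^ 2 :: real)"
  proof (rule summable_comparison_test'[where g = "\<lambda>n. 1 / (real n + 1) ^ 2"])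
    show "summable (\<lambda>n. 1 / (real n + 1) ^ 2)"
      using inverse_squares_sums by (simp add: sums_iff add.commute)
    show "norm ((-1) ^ n / (2 * real n + 1) ^ 2 :: real) \<le> 1 / (real n + 1) ^ 2" for n
    proof -
      have "(real n + 1)^2 \<le> (2*real n+1)^2" by (intro power_mono) auto
      hence "1 / (2*real n+1)^2 \<le> 1 / (real n + 1)^2" by (intro divide_left_mono) auto
      thus ?thesis by (simp add: norm_divide norm_power)
    qed
  qed
  thus ?thesis unfolding catalan_def by (simp add: summable_sums)
qed

lemma catalan_pairs: "(\<lambda>n. 1 / (4 * real n + 1) ^ 2 - 1 / (4 * real n + 3) ^ 2) sums catalan"
proof -
  have "(\<lambda>n. sum (\<lambda>m. (-1) ^ m / (2 * real m + 1) ^ 2) {n * 2..<n * 2 + 2}) sums catalan"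
    by (rule sums_group[OF catalan_sums]) auto
  moreover have "(\<lambda>n. sum (\<lambda>m. (-1) ^ m / (2 * real m + 1) ^ 2) {n * 2..<n * 2 + 2}) = (\<lambda>n. 1 / (4 * real n + 1) ^ 2 - 1 / (4 * real n + 3) ^ 2)"
  proof
    fix n :: nat
    have "{n * 2..<n * 2 + 2} = {2*n, 2*n+1}" by auto
    thus "sum (\<lambda>m. (-1) ^ m / (2 * real m + 1) ^ 2) {n * 2..<n * 2 + 2} = 1 / (4 * real n + 1) ^ 2 - 1 / (4 * real n + 3) ^ 2"
      by (simp add: algebra_simps)
  qed
  ultimately show ?thesis by (simp only:)
qed

lemma pw_m2:
  assumes "x > 0" shows "pw x (-2) = complex_of_real (1 / x ^ 2)"
proof -
  have "pw x (-2) = complex_of_real x powr complex_of_real (-2)" by (simp add: pw_def)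
  also have "\<dots> = complex_of_real (x powr (-2))" using assms by (subst powr_of_real) auto
  also have "x powr (-2) = 1 / x ^ 2" using assms by (simp add: powr_minus powr_realpow divide_inverse)
  finally show ?thesis .
qed

lemma hz2_diff: "hurwitz_zeta_series 2 (1/4) - hurwitz_zeta_series 2 (3/4) = 16 * complex_of_real catalan"
proof -
  have s1: "(\<lambda>n. pw (real n + 1/4) (-2)) sums hurwitz_zeta_series 2 (1/4)"
    using summable_pw[of "1/4" 2] unfolding hz_pw pw_def by (auto intro!: summable_sums summable_norm_cancel)
  have s3: "(\<lambda>n. pw (real n + 3/4) (-2)) sums hurwitz_zeta_series 2 (3/4)"
    using summable_pw[of "3/4" 2] unfolding hz_pw pw_def by (auto intro!: summable_sums summable_norm_cancel)
  have "(\<lambda>n. pw (real n + 1/4) (-2) - pw (real n + 3/4) (-2)) sums (hurwitz_zeta_series 2 (1/4) - hurwitz_zeta_series 2 (3/4))"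
    by (rule sums_diff[OF s1 s3])
  moreover have "pw (real n + 1/4) (-2) - pw (real n + 3/4) (-2) = complex_of_real (16 * (1 / (4 * real n + 1) ^ 2 - 1 / (4 * real n + 3) ^ 2))" for n
  proof -
    have "pw (real n + 1/4) (-2) - pw (real n + 3/4) (-2) = complex_of_real (1 / (real n + 1/4) ^ 2 - 1 / (real n + 3/4) ^ 2)"
      by (simp add: pw_m2 add_pos_nonneg del: of_real_add)
    also have "1 / (real n + 1/4) ^ 2 - 1 / (real n + 3/4) ^ 2 = 16 * (1 / (4 * real n + 1) ^ 2 - 1 / (4 * real n + 3) ^ 2)"
      by (simp add: field_simps power2_eq_square)
    finally show ?thesis .
  qed
  moreover have "(\<lambda>n. complex_of_real (16 * (1 / (4 * real n + 1) ^ 2 - 1 / (4 * real n + 3) ^ 2))) sums complex_of_real (16 * catalan)"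
    by (subst sums_of_real_iff) (intro sums_mult catalan_pairs)
  ultimately show ?thesis by (simp add: sums_iff)
qed

lemma stieltjes_part:
  defines "S \<equiv> (\<lambda>k::nat. (-1) ^ k / fact k * (stieltjes k (1/4) - stieltjes k (3/4)))"
  shows "S sums (16 * complex_of_real catalan)"
proof -
  define h where "h s = hurwitz_zeta_regular (1/4) s - hurwitz_zeta_regular (3/4) s" for s
  have h1: "hurwitz_zeta_regular (1/4) holomorphic_on UNIV" by (rule hzr) simp
  have h3: "hurwitz_zeta_regular (3/4) holomorphic_on UNIV" by (rule hzr) simp
  have "h holomorphic_on UNIV" unfolding h_def using h1 h3 by (intro holomorphic_intros)
  hence "(\<lambda>n. (deriv ^^ n) h 1 / fact n * (2 - 1) ^ n) sums h 2"
    by (intro holomorphic_power_series[of h 1 2]) (auto simp: dist_norm intro: holomorphic_on_subset)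
  moreover have "(deriv ^^ n) h 1 / fact n * (2 - 1) ^ n = S n" for n
  proof -
    have "(deriv ^^ n) h 1 = (deriv ^^ n) (hurwitz_zeta_regular (1/4)) 1 - (deriv ^^ n) (hurwitz_zeta_regular (3/4)) 1"
      unfolding h_def by (rule higher_deriv_diff[OF h1 h3]) auto
    moreover have "(-1) ^ n * (-1) ^ n = (1 :: complex)" by (simp flip: power_mult_distrib)
    ultimately show ?thesis
      unfolding S_def stieltjes_def by (simp add: field_simps)
  qed
  moreover have "h 2 = 16 * complex_of_real catalan"
    using hzr(2)[of "1/4" 2] hzr(2)[of "3/4" 2] hz2_diff by (simp add: h_def)
  ultimately show ?thesis by simp
qed

definition Sv :: "nat \<Rightarrow> nat set" where
  "Sv N = {n. n > 0 \<and> (\<forall>p. prime p \<and> p dvd n \<longrightarrow> N < p)}"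

lemma euler_sieve:
  fixes f :: "nat \<Rightarrow> real"
  assumes f1: "f 1 = 1" and fm: "\<And>m n. f (m*n) = f m * f n" and sf: "summable (\<lambda>n. \<bar>f n\<bar>)"
  shows "(\<lambda>N. (\<Prod>p\<in>{p. prime p \<and> p \<le> N}. 1 - f p) * infsum f {n. n > 0}) \<longlonglongrightarrow> 1"
proof -
  have fU: "f summable_on UNIV" using sf by (intro norm_summable_imp_summable_on) simp
  have fs: "f summable_on A" for A by (rule summable_on_subset_banach[OF fU]) auto
  have afU: "(\<lambda>n. \<bar>f n\<bar>) summable_on UNIV" using sf by (intro summable_nonneg_imp_summable_on) auto
  have afs: "(\<lambda>n. \<bar>f n\<bar>) summable_on A" for A by (rule summable_on_subset_banach[OF afU]) auto
  have fin: "finite {p. prime p \<and> p \<le> N}" for N :: nat by auto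
  have ind: "infsum f (Sv N) = (\<Prod>p\<in>{p. prime p \<and> p \<le> N}. 1 - f p) * infsum f {n. n > 0}" for N
  proof (induction N)
    case 0
    have a: "Sv 0 = {n. n > 0}" by (auto simp: Sv_def prime_gt_0_nat)
    have b: "{p. prime p \<and> p \<le> (0::nat)} = {}" by auto
    show ?case by (simp only: a b prod.empty mult_1)
  next
    case (Suc N)
    show ?case
    proof (cases "prime (Suc N)")
      case False
      have hp: "prime p \<Longrightarrow> (Suc N < p) = (N < p)" for p
        using False by (metis Suc_lessD Suc_lessI)
      have "Sv (Suc N) = Sv N"
        unfolding Sv_def by (simp add: hp)
      moreover have "{p. prime p \<and> p \<le> Suc N} = {p. prime p \<and> p \<le> N}"
        using False le_Suc_eq by auto
      ultimately show ?thesis using Suc.IH by simp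
    next
      case True
      define q where "q = Suc N"
      have q: "prime q" using True by (simp add: q_def)
      have split: "Sv N = Sv (Suc N) \<union> (\<lambda>m. q * m) ` Sv N"
      proof (intro equalityI subsetI)
        fix n assume n: "n \<in> Sv N"
        show "n \<in> Sv (Suc N) \<union> (\<lambda>m. q * m) ` Sv N"
        proof (cases "q dvd n")
          case False
          hence "n \<in> Sv (Suc N)" using n unfolding Sv_def q_def
            by (auto simp: Suc_le_eq le_less) (metis Suc_lessI)
          thus ?thesis by blast
        next
          case True
          then obtain m where m: "n = q * m" by (auto elim: dvdE)
          have "m \<in> Sv N" using n unfolding Sv_def m by (auto intro: dvd_mult)
          thus ?thesis using m by blast
        qed
      next
        fix n assume "n \<in> Sv (Suc N) \<union> (\<lambda>m. q * m) ` Sv N"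
        thus "n \<in> Sv N"
        proof
          assume "n \<in> Sv (Suc N)" thus "n \<in> Sv N" by (auto simp: Sv_def)
        next
          assume "n \<in> (\<lambda>m. q * m) ` Sv N"
          then obtain m where m: "m \<in> Sv N" "n = q * m" by blast
          have "0 < q" using q prime_gt_0_nat by blast
          moreover have "N < p" if "prime p" "p dvd q * m" for p
          proof -
            from that have "p dvd q \<or> p dvd m" using prime_dvd_mult_iff by blast
            thus ?thesis
            proof
              assume "p dvd q"
              hence "p = q" using q that(1) by (simp add: primes_dvd_imp_eq)
              thus ?thesis by (simp add: q_def)
            qed (use m that in \<open>auto simp: Sv_def\<close>)
          qed
          ultimately show "n \<in> Sv N" using m by (auto simp: Sv_def)
        qed
      qed
      have disj: "Sv (Suc N) \<inter> (\<lambda>m. q * m) ` Sv N = {}"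
      proof (rule ccontr)
        assume "Sv (Suc N) \<inter> (\<lambda>m. q * m) ` Sv N \<noteq> {}"
        then obtain m where "q * m \<in> Sv (Suc N)" by auto
        hence "\<forall>p. prime p \<and> p dvd q * m \<longrightarrow> Suc N < p" by (simp add: Sv_def)
        hence "Suc N < q" using q by auto
        thus False by (simp add: q_def)
      qed
      have inj: "inj_on (\<lambda>m. q * m) (Sv N)" using q by (auto simp: inj_on_def prime_gt_0_nat)
      have "infsum f ((\<lambda>m. q * m) ` Sv N) = infsum (\<lambda>m. f q * f m) (Sv N)"
        using infsum_reindex[OF inj, of f] by (simp add: o_def fm)
      also have "\<dots> = f q * infsum f (Sv N)" by (rule infsum_cmult_right') 
      finally have e2: "infsum f ((\<lambda>m. q * m) ` Sv N) = f q * infsum f (Sv N)" .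
      have "infsum f (Sv N) = infsum f (Sv (Suc N)) + infsum f ((\<lambda>m. q * m) ` Sv N)"
        by (subst split, rule infsum_Un_disjoint[OF fs fs disj])
      hence e3: "infsum f (Sv (Suc N)) = (1 - f q) * infsum f (Sv N)"
        unfolding e2 by (simp add: algebra_simps)
      have "{p. prime p \<and> p \<le> Suc N} = insert q {p. prime p \<and> p \<le> N}"
        using q by (auto simp: q_def le_Suc_eq)
      moreover have "q \<notin> {p. prime p \<and> p \<le> N}" by (auto simp: q_def)
      ultimately have "(\<Prod>p\<in>{p. prime p \<and> p \<le> Suc N}. 1 - f p) = (1 - f q) * (\<Prod>p\<in>{p. prime p \<and> p \<le> N}. 1 - f p)"
        by (simp add: fin)
      thus ?thesis using e3 Suc.IH by (simp add: q_def mult_ac)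
    qed
  qed
  have tail: "(\<lambda>N. infsum (\<lambda>n. \<bar>f n\<bar>) {N<..}) \<longlonglongrightarrow> 0"
  proof -
    have tot: "infsum (\<lambda>n. \<bar>f n\<bar>) UNIV = sum (\<lambda>n. \<bar>f n\<bar>) {..N} + infsum (\<lambda>n. \<bar>f n\<bar>) {N<..}" for N
    proof -
      have "UNIV = {..N} \<union> {N<..}" by auto
      hence "infsum (\<lambda>n. \<bar>f n\<bar>) UNIV = infsum (\<lambda>n. \<bar>f n\<bar>) ({..N} \<union> {N<..})" by simp
      also have "\<dots> = infsum (\<lambda>n. \<bar>f n\<bar>) {..N} + infsum (\<lambda>n. \<bar>f n\<bar>) {N<..}"
        by (rule infsum_Un_disjoint[OF afs afs]) auto
      finally show ?thesis by simp
    qed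
    have "infsum (\<lambda>n. \<bar>f n\<bar>) UNIV = suminf (\<lambda>n. \<bar>f n\<bar>)"
      using sums_nonneg_imp_has_sum[OF summable_sums[OF sf]] by (simp add: has_sum_iff)
    hence "(\<lambda>N. sum (\<lambda>n. \<bar>f n\<bar>) {..N}) \<longlonglongrightarrow> infsum (\<lambda>n. \<bar>f n\<bar>) UNIV"
      using summable_LIMSEQ'[OF sf] by simp
    hence "(\<lambda>N. infsum (\<lambda>n. \<bar>f n\<bar>) UNIV - sum (\<lambda>n. \<bar>f n\<bar>) {..N}) \<longlonglongrightarrow> infsum (\<lambda>n. \<bar>f n\<bar>) UNIV - infsum (\<lambda>n. \<bar>f n\<bar>) UNIV"
      by (intro tendsto_intros)
    moreover have "(\<lambda>N. infsum (\<lambda>n. \<bar>f n\<bar>) {N<..}) = (\<lambda>N. infsum (\<lambda>n. \<bar>f n\<bar>) UNIV - sum (\<lambda>n. \<bar>f n\<bar>) {..N})"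
      using tot by (auto simp: fun_eq_iff algebra_simps)
    ultimately show ?thesis by simp
  qed
  have lim: "(\<lambda>N. infsum f (Sv N)) \<longlonglongrightarrow> 1"
  proof -
    have e: "infsum f (Sv N) = 1 + infsum f (Sv N - {1})" for N
    proof -
      have "1 \<in> Sv N" by (auto simp: Sv_def)
      hence "Sv N = {1} \<union> (Sv N - {1})" by auto
      hence "infsum f (Sv N) = infsum f ({1} \<union> (Sv N - {1}))" by simp
      also have "\<dots> = infsum f {1} + infsum f (Sv N - {1})" by (rule infsum_Un_disjoint[OF fs fs]) auto
      finally show ?thesis using f1 by simp
    qed
    have b: "norm (infsum f (Sv N - {1})) \<le> infsum (\<lambda>n. \<bar>f n\<bar>) {N<..}" for N
    proof -
      have "norm (infsum f (Sv N - {1})) \<le> infsum (\<lambda>n. norm (f n)) (Sv N - {1})"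
        by (rule norm_infsum_bound) (simp add: afs)
      also have "\<dots> \<le> infsum (\<lambda>n. \<bar>f n\<bar>) {N<..}"
      proof (rule infsum_mono_neutral)
        show "(\<lambda>n. norm (f n)) summable_on (Sv N - {1})" using afs by simp
        show "x \<in> (Sv N - {1}) - {N<..} \<Longrightarrow> norm (f x) \<le> 0" for x
        proof -
          assume x: "x \<in> (Sv N - {1}) - {N<..}"
          then obtain p where "prime p" "p dvd x" using prime_factor_nat by auto
          moreover have "x > 0" using x by (auto simp: Sv_def)
          ultimately have "N < p" "p \<le> x" using x by (auto simp: Sv_def dvd_imp_le)
          thus ?thesis using x by auto
        qed
      qed (use afs in auto)
      finally show ?thesis .
    qed
    have "(\<lambda>N. infsum f (Sv N - {1})) \<longlonglongrightarrow> 0"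
      by (rule Lim_null_comparison[OF _ tail]) (use b in auto)
    hence "(\<lambda>N. 1 + infsum f (Sv N - {1})) \<longlonglongrightarrow> 1 + 0" by (intro tendsto_intros)
    thus ?thesis using e by simp
  qed
  thus ?thesis using ind by simp
qed

lemma bonf:
  fixes a :: "nat \<Rightarrow> real"
  assumes a: "\<And>k. 0 \<le> a k" "\<And>k. a k \<le> 1"
  shows "0 \<le> (\<Prod>k<n. 1 - a k) \<and> (\<Prod>k<n. 1 - a k) \<le> 1 \<and>
         1 - (\<Sum>k<n. a k) \<le> (\<Prod>k<n. 1 - a k) \<and>
         (\<Prod>k<n. 1 - a k) \<le> 1 - (\<Sum>k<n. a k) + ((\<Sum>k<n. a k)^2 - (\<Sum>k<n. a k ^ 2)) / 2 \<and>
         1 - (\<Sum>k<n. a k) + ((\<Sum>k<n. a k)^2 - (\<Sum>k<n. a k ^ 2)) / 2 - (\<Sum>k<n. a k)^3 \<le> (\<Prod>k<n. 1 - a k)"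
proof (induction n)
  case 0 thus ?case by simp
next
  case (Suc n)
  define P where "P = (\<Prod>k<n. 1 - a k)"
  define E where "E = (\<Sum>k<n. a k)"
  define Q where "Q = (\<Sum>k<n. a k ^ 2)"
  define x where "x = a n"
  have x: "0 \<le> x" "x \<le> 1" using a by (auto simp: x_def)
  have E: "E \<ge> 0" unfolding E_def using a by (intro sum_nonneg) auto
  have Q: "Q \<ge> 0" unfolding Q_def by (intro sum_nonneg) auto
  have IH: "0 \<le> P" "P \<le> 1" "1 - E \<le> P" "P \<le> 1 - E + (E^2 - Q)/2" "1 - E + (E^2 - Q)/2 - E^3 \<le> P"
    using Suc.IH unfolding P_def E_def Q_def by auto
  have eqs: "(\<Prod>k<Suc n. 1 - a k) = P * (1 - x)" "(\<Sum>k<Suc n. a k) = E + x" "(\<Sum>k<Suc n. a k ^ 2) = Q + x^2"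
    by (simp_all add: P_def E_def Q_def x_def)
  have g1: "0 \<le> P * (1 - x)" using IH x by simp
  have xP: "x * P \<le> x" using IH x by (simp add: mult_left_le)
  have Px: "0 \<le> P * x" using IH x by simp
  have g2: "P * (1 - x) \<le> 1" using IH Px by (simp add: algebra_simps)
  have g3: "1 - (E + x) \<le> P * (1 - x)" using IH xP by (simp add: algebra_simps)
  have xP2: "x * (1 - E) \<le> x * P" using IH x by (intro mult_left_mono) auto
  have g4: "P * (1 - x) \<le> 1 - (E + x) + ((E + x)^2 - (Q + x^2)) / 2"
  proof -
    have e1: "P * (1 - x) = P - x * P" by (simp add: algebra_simps)
    have e2: "(E + x)^2 - (Q + x^2) = (E^2 - Q) + 2 * (x * E)" by (simp add: power2_eq_square algebra_simps)
    have e3: "x - x * E \<le> x * P" using xP2 by (simp add: algebra_simps)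
    have e4: "(E^2 - Q + 2 * (x * E)) / 2 = (E^2 - Q) / 2 + x * E" by simp
    show ?thesis unfolding e1 e2 e4 using IH(4) e3 by linarith
  qed
  have xP3: "x * P \<le> x * (1 - E + (E^2 - Q)/2)" using IH x by (intro mult_left_mono) auto
  have c0: "(E^2 - Q)/2 \<le> 3 * E^2" using Q zero_le_power2[of E] by (simp add: field_simps)
  have c1: "x * ((E^2 - Q)/2) \<le> x * (3 * E^2)" using x c0 by (intro mult_left_mono) auto
  have c2: "E^3 + x * (3 * E^2) \<le> (E + x)^3"
  proof -
    have "(E + x)^3 = E^3 + x * (3 * E^2) + (3 * E * x^2 + x^3)" by (simp add: power3_eq_cube algebra_simps power2_eq_square)
    moreover have "3 * E * x^2 + x^3 \<ge> 0" using E x by simp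
    ultimately show ?thesis by linarith
  qed
  have g5: "1 - (E + x) + ((E + x)^2 - (Q + x^2)) / 2 - (E + x)^3 \<le> P * (1 - x)"
  proof -
    have "P * (1 - x) = P - x * P" by (simp add: algebra_simps)
    also have "\<dots> \<ge> (1 - E + (E^2 - Q)/2 - E^3) - x * (1 - E + (E^2 - Q)/2)" using IH(5) xP3 by linarith
    finally have "P * (1 - x) \<ge> (1 - E + (E^2 - Q)/2 - E^3) - x * (1 - E + (E^2 - Q)/2)" .
    moreover have "(1 - E + (E^2 - Q)/2 - E^3) - x * (1 - E + (E^2 - Q)/2) =
        1 - (E + x) + ((E + x)^2 - (Q + x^2)) / 2 - (E^3 + x * ((E^2 - Q)/2))"
      by (simp add: field_simps power2_eq_square)
    ultimately show ?thesis using c1 c2 by linarith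
  qed
  show ?case unfolding eqs using g1 g2 g3 g4 g5 by blast
qed

lemma prod_shift1: "(\<Prod>k=1..n. f k) = (\<Prod>k<n. f (Suc k))"
  by (induction n) (simp_all add: prod.cl_ivl_Suc)

lemma prod_shift1': "(\<Prod>k=Suc 0..n. f k) = (\<Prod>k<n. f (Suc k))"
  using prod_shift1 by simp

lemma zeta4: "(\<lambda>n. 1 / (real n + 1) ^ 4) sums (pi ^ 4 / 90)"
proof -
  define Z2 where "Z2 = pi^2 / 6"
  have s2: "(\<lambda>n. 1 / (real n + 1) ^ 2) sums Z2" using inverse_squares_sums by (simp add: Z2_def add.commute)
  have sum4: "summable (\<lambda>n. 1 / (real n + 1) ^ 4)"
  proof (rule summable_comparison_test'[OF sums_summable[OF s2]])
    show "norm (1 / (real n + 1) ^ 4) \<le> 1 / (real n + 1) ^ 2" for n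
    proof -
      have "(real n + 1)^2 \<le> (real n + 1)^4"
        by (rule power_increasing) auto
      thus ?thesis by (simp add: divide_left_mono)
    qed
  qed
  define Z4 where "Z4 = (\<Sum>n. 1 / (real n + 1) ^ 4)"
  have s4: "(\<lambda>n. 1 / (real n + 1) ^ 4) sums Z4" using sum4 by (simp add: Z4_def summable_sums)
  define c where "c = (Z2^2 - Z4) / 2"
  define F where "F x = sin (pi * x) / (pi * x)" for x :: real
  have bounds: "c - x^2 * Z2^3 \<le> (F x - 1 + x^2 * Z2) / x^4 \<and> (F x - 1 + x^2 * Z2) / x^4 \<le> c"
    if x: "0 < x" "x \<le> 1" for x
  proof -
    define a where "a k = x^2 / (real k + 1)^2" for k
    have a0: "0 \<le> a k" for k by (simp add: a_def)
    have a1: "a k \<le> 1" for k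
    proof -
      have "x^2 \<le> 1" using x by (simp add: power_le_one)
      also have "1 \<le> (real k + 1)^2" by simp
      finally show ?thesis by (simp add: a_def)
    qed
    note bn = bonf[of a, OF a0 a1]
    have E: "(\<Sum>k<n. a k) = x^2 * (\<Sum>k<n. 1 / (real k + 1)^2)" for n
      by (simp add: a_def sum_distrib_left)
    have Q: "(\<Sum>k<n. a k ^ 2) = x^4 * (\<Sum>k<n. 1 / (real k + 1)^4)" for n
      by (simp add: a_def sum_distrib_left power_divide flip: power_mult)
    have P: "(\<lambda>n. \<Prod>k<n. 1 - a k) \<longlonglongrightarrow> F x"
    proof -
      have "(\<lambda>n. \<Prod>k=1..n. 1 - x^2 / real k ^ 2) \<longlonglongrightarrow> F x"
        unfolding F_def using sin_product_formula_real'[of x] x by simp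
      thus ?thesis by (simp add: prod_shift1' a_def add.commute)
    qed
    have S2: "(\<lambda>n. \<Sum>k<n. 1 / (real k + 1)^2) \<longlonglongrightarrow> Z2" using s2 by (simp add: sums_def)
    have S4: "(\<lambda>n. \<Sum>k<n. 1 / (real k + 1)^4) \<longlonglongrightarrow> Z4" using s4 by (simp add: sums_def)
    define U where "U y z = 1 - x^2 * y + ((x^2 * y)^2 - x^4 * z) / 2" for y z
    have Ulim: "(\<lambda>n. U (\<Sum>k<n. 1 / (real k + 1)^2) (\<Sum>k<n. 1 / (real k + 1)^4)) \<longlonglongrightarrow> U Z2 Z4"
      unfolding U_def by (intro tendsto_intros S2 S4) simp
    have Llim: "(\<lambda>n. U (\<Sum>k<n. 1 / (real k + 1)^2) (\<Sum>k<n. 1 / (real k + 1)^4) - (x^2 * (\<Sum>k<n. 1 / (real k + 1)^2))^3) \<longlonglongrightarrow> U Z2 Z4 - (x^2 * Z2)^3"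
      by (intro tendsto_intros Ulim S2)
    have up: "F x \<le> U Z2 Z4"
    proof (rule LIMSEQ_le[OF P Ulim])
      show "\<exists>N. \<forall>n\<ge>N. (\<Prod>k<n. 1 - a k) \<le> U (\<Sum>k<n. 1 / (real k + 1)^2) (\<Sum>k<n. 1 / (real k + 1)^4)"
        using bn by (auto simp: E Q U_def)
    qed
    have lo: "U Z2 Z4 - (x^2 * Z2)^3 \<le> F x"
    proof (rule LIMSEQ_le[OF Llim P])
      show "\<exists>N. \<forall>n\<ge>N. U (\<Sum>k<n. 1 / (real k + 1)^2) (\<Sum>k<n. 1 / (real k + 1)^4) - (x^2 * (\<Sum>k<n. 1 / (real k + 1)^2))^3 \<le> (\<Prod>k<n. 1 - a k)"
        using bn by (auto simp: E Q U_def)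
    qed
    have x4: "x^4 > 0" using x by simp
    have eqU: "U Z2 Z4 = 1 - x^2 * Z2 + x^4 * c" by (simp add: U_def c_def algebra_simps power2_eq_square power4_eq_xxxx)
    have "(F x - 1 + x^2 * Z2) \<le> x^4 * c" using up eqU by simp
    hence hi: "(F x - 1 + x^2 * Z2) / x^4 \<le> c" using x4 by (simp add: divide_le_eq mult.commute)
    have "x^4 * (c - x^2 * Z2^3) \<le> (F x - 1 + x^2 * Z2)" using lo eqU
      by (simp add: algebra_simps power_mult_distrib flip: power_add)
    hence "c - x^2 * Z2^3 \<le> (F x - 1 + x^2 * Z2) / x^4" using x4 by (simp add: le_divide_eq mult.commute)
    with hi show ?thesis by blast
  qed
  have ev: "eventually (\<lambda>x. 0 < x \<and> x \<le> (1::real)) (at_right 0)"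
    unfolding eventually_at_right_field by (auto intro!: exI[of _ 1])
  have lim1: "((\<lambda>x. (F x - 1 + x^2 * Z2) / x^4) \<longlongrightarrow> c) (at_right 0)"
  proof (rule tendsto_sandwich[where f = "\<lambda>x. c - x^2 * Z2^3" and h = "\<lambda>_. c"])
    show "eventually (\<lambda>x. c - x^2 * Z2^3 \<le> (F x - 1 + x^2 * Z2) / x^4) (at_right 0)"
      using ev by eventually_elim (use bounds in blast)
    show "eventually (\<lambda>x. (F x - 1 + x^2 * Z2) / x^4 \<le> c) (at_right 0)"
      using ev by eventually_elim (use bounds in blast)
    have "((\<lambda>x. c - x^2 * Z2^3) \<longlongrightarrow> c - 0^2 * Z2^3) (at_right 0)"
      by (intro tendsto_intros)
    thus "((\<lambda>x. c - x^2 * Z2^3) \<longlongrightarrow> c) (at_right 0)" by simp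
  qed simp
  have H: "((\<lambda>t::real. (sin t / t - 1 + t^2/6) / t^4) \<longlongrightarrow> 1/120) (at_right 0)"
    by real_asymp
  have pif: "filterlim (\<lambda>x. pi * x) (at_right 0) (at_right (0::real))"
  proof -
    have "((\<lambda>x. pi * x) \<longlongrightarrow> pi * 0) (at_right (0::real))" by (intro tendsto_intros)
    moreover have "eventually (\<lambda>x. pi * x \<in> {0<..} \<and> pi * x \<noteq> 0) (at_right (0::real))"
      unfolding eventually_at_right_field by (auto intro!: exI[of _ 1])
    ultimately show ?thesis by (simp add: filterlim_at)
  qed
  have "((\<lambda>x. (sin (pi * x) / (pi * x) - 1 + (pi * x)^2/6) / (pi * x)^4) \<longlongrightarrow> 1/120) (at_right 0)"
    by (rule filterlim_compose[OF H pif])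
  hence "((\<lambda>x. pi^4 * ((sin (pi * x) / (pi * x) - 1 + (pi * x)^2/6) / (pi * x)^4)) \<longlongrightarrow> pi^4 * (1/120)) (at_right 0)"
    by (rule tendsto_mult_left)
  moreover have "eventually (\<lambda>x. pi^4 * ((sin (pi * x) / (pi * x) - 1 + (pi * x)^2/6) / (pi * x)^4) = (F x - 1 + x^2 * Z2) / x^4) (at_right 0)"
    using ev
  proof eventually_elim
    case (elim x)
    thus ?case by (simp add: F_def Z2_def field_simps power_mult_distrib) (simp add: eval_nat_numeral algebra_simps)
  qed
  ultimately have lim2: "((\<lambda>x. (F x - 1 + x^2 * Z2) / x^4) \<longlongrightarrow> pi^4 / 120) (at_right 0)"
    by (simp add: tendsto_cong)
  have "c = pi^4 / 120" using tendsto_unique[OF _ lim1 lim2] by simp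
  hence z4: "Z4 = pi^4 / 90" by (simp add: c_def Z2_def power2_eq_square power4_eq_xxxx field_simps)
  show ?thesis using s4 unfolding z4 .
qed

definition chi4 :: "nat \<Rightarrow> real" where
  "chi4 n = (if n mod 4 = 1 then 1 else if n mod 4 = 3 then -1 else 0)"

lemma chi4_mult: "chi4 (m * n) = chi4 m * chi4 n"
proof -
  have e: "(m * n) mod 4 = ((m mod 4) * (n mod 4)) mod 4" by (simp add: mod_mult_eq)
  have "m mod 4 \<in> {0,1,2,3}" "n mod 4 \<in> {0,1,2,3}" by auto
  thus ?thesis unfolding chi4_def e by auto
qed

lemma chi4_odd: "chi4 (2 * m + 1) = (-1) ^ m"
proof (cases "even m")
  case True
  then obtain k where "m = 2 * k" by (auto elim: evenE)
  thus ?thesis by (simp add: chi4_def)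
next
  case False
  then obtain k where "m = 2 * k + 1" by (auto elim: oddE)
  thus ?thesis by (simp add: chi4_def)
qed

lemma chi4_odd': "chi4 (Suc (2 * m)) = (-1) ^ m"
  using chi4_odd[of m] by simp

lemma chi4_even: "even n \<Longrightarrow> chi4 n = 0"
proof -
  assume "even n"
  hence "n mod 4 \<noteq> 1 \<and> n mod 4 \<noteq> 3" by presburger
  thus ?thesis by (simp add: chi4_def)
qed

lemma infsum_pos_sums:
  fixes f :: "nat \<Rightarrow> real"
  assumes "(\<lambda>n. f (Suc n)) sums L" "summable (\<lambda>n. \<bar>f n\<bar>)"
  shows "infsum f {n. n > 0} = L"
proof -
  have bij: "bij_betw Suc UNIV {n. n > 0}" by (rule bij_betwI[where g = "\<lambda>n. n - 1"]) auto
  have "summable (\<lambda>n. norm (f (Suc n)))" using assms(2) by (subst summable_Suc_iff) simp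
  hence "((\<lambda>n. f (Suc n)) has_sum L) UNIV" using assms(1) by (rule norm_summable_imp_has_sum)
  hence "(\<Sum>\<^sub>\<infinity>n\<in>UNIV. f (Suc n)) = L" by (simp add: has_sum_iff)
  thus ?thesis using infsum_reindex_bij_betw[OF bij, of f] by simp
qed

definition f2 :: "nat \<Rightarrow> real" where "f2 n = 1 / real n ^ 2"
definition f4 :: "nat \<Rightarrow> real" where "f4 n = 1 / real n ^ 4"
definition fc :: "nat \<Rightarrow> real" where "fc n = chi4 n / real n ^ 2"

lemma f2_sums: "(\<lambda>n. f2 (Suc n)) sums (pi^2/6)"
  using inverse_squares_sums by (simp add: f2_def add.commute)
lemma f4_sums: "(\<lambda>n. f4 (Suc n)) sums (pi^4/90)"
  using zeta4 by (simp add: f4_def add.commute)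

lemma f2_summable: "summable (\<lambda>n. \<bar>f2 n\<bar>)"
  using sums_summable[OF f2_sums] by (subst summable_Suc_iff[symmetric]) (simp add: f2_def)
lemma f4_summable: "summable (\<lambda>n. \<bar>f4 n\<bar>)"
  using sums_summable[OF f4_sums] by (subst summable_Suc_iff[symmetric]) (simp add: f4_def)
lemma fc_summable: "summable (\<lambda>n. \<bar>fc n\<bar>)"
proof (rule summable_comparison_test'[OF f2_summable])
  show "norm \<bar>fc n\<bar> \<le> \<bar>f2 n\<bar>" for n by (auto simp: fc_def f2_def chi4_def abs_divide)
qed

lemma fc_infsum: "infsum fc {n. n > 0} = catalan"
proof -
  have "infsum fc {n. n > 0} = infsum fc (range (\<lambda>m. 2 * m + 1))"
  proof (rule infsum_cong_neutral)
    fix x :: nat assume "x \<in> {n. n > 0} - range (\<lambda>m. 2 * m + 1)"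
    hence "even x"
    proof (rule contrapos_pp)
      assume "odd x"
      then obtain k where "x = 2 * k + 1" by (auto elim!: oddE)
      thus "\<not> x \<in> {n. n > 0} - range (\<lambda>m. 2 * m + 1)" by auto
    qed
    thus "fc x = 0" by (simp add: fc_def chi4_even)
  qed auto
  also have "\<dots> = infsum (fc \<circ> (\<lambda>m. 2 * m + 1)) UNIV"
    by (rule infsum_reindex) (auto simp: inj_on_def)
  also have "\<dots> = catalan"
  proof -
    have eq: "(fc \<circ> (\<lambda>m. 2 * m + 1)) = (\<lambda>n. (-1) ^ n / (2 * real n + 1) ^ 2)"
      by (auto simp: fc_def chi4_odd' fun_eq_iff add.commute)
    have "summable (\<lambda>n. norm ((-1) ^ n / (2 * real n + 1) ^ 2 :: real))"
    proof (rule summable_comparison_test'[where g = "\<lambda>n. 1 / (real n + 1) ^ 2"])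
      show "summable (\<lambda>n. 1 / (real n + 1) ^ 2)"
        using inverse_squares_sums by (simp add: sums_iff add.commute)
      show "norm (norm ((-1) ^ n / (2 * real n + 1) ^ 2 :: real)) \<le> 1 / (real n + 1) ^ 2" for n
      proof -
        have "(real n + 1)^2 \<le> (2*real n+1)^2" by (intro power_mono) auto
        hence "1 / (2*real n+1)^2 \<le> 1 / (real n + 1)^2" by (intro divide_left_mono) auto
        thus ?thesis by (simp add: norm_divide norm_power)
      qed
    qed
    from norm_summable_imp_has_sum[OF this catalan_sums] show ?thesis
      unfolding eq by (simp add: has_sum_iff)
  qed
  finally show ?thesis .
qed

lemma catalan_pos: "catalan > 0"
proof -
  have "0 < (\<Sum>n. 1 / (4 * real n + 1) ^ 2 - 1 / (4 * real n + 3) ^ 2)"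
  proof (rule suminf_pos)
    show "summable (\<lambda>n. 1 / (4 * real n + 1) ^ 2 - 1 / (4 * real n + 3) ^ 2)"
      using catalan_pairs by (rule sums_summable)
    show "0 < 1 / (4 * real n + 1) ^ 2 - 1 / (4 * real n + 3) ^ 2" for n
    proof -
      have "(4 * real n + 1)^2 < (4 * real n + 3)^2" by (intro power_strict_mono) auto
      hence "1 / (4 * real n + 3)^2 < 1 / (4 * real n + 1)^2" by (intro divide_strict_left_mono) auto
      thus ?thesis by simp
    qed
  qed
  thus ?thesis using catalan_pairs by (simp add: sums_iff)
qed

abbreviation Pr :: "nat \<Rightarrow> nat set" where "Pr N \<equiv> {p. prime p \<and> p \<le> N}"

lemma euler_lim:
  fixes f :: "nat \<Rightarrow> real"
  assumes "f 1 = 1" "\<And>m n. f (m*n) = f m * f n" "summable (\<lambda>n. \<bar>f n\<bar>)" "infsum f {n. n > 0} = L" "L \<noteq> 0"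
  shows "(\<lambda>N. \<Prod>p\<in>Pr N. 1 - f p) \<longlonglongrightarrow> 1 / L"
proof -
  have "(\<lambda>N. (\<Prod>p\<in>Pr N. 1 - f p) * L * (1 / L)) \<longlonglongrightarrow> 1 * (1 / L)"
    using euler_sieve[OF assms(1-3)] assms(4) by (intro tendsto_intros) simp
  thus ?thesis using assms(5) by simp
qed

lemma limA: "(\<lambda>N. \<Prod>p\<in>Pr N. 1 - f2 p) \<longlonglongrightarrow> 1 / (pi^2/6)"
proof (rule euler_lim)
  show "f2 (m * n) = f2 m * f2 n" for m n by (simp add: f2_def power_mult_distrib)
qed (use infsum_pos_sums[OF f2_sums f2_summable] f2_summable in \<open>auto simp: f2_def\<close>)
lemma limC: "(\<lambda>N. \<Prod>p\<in>Pr N. 1 - f4 p) \<longlonglongrightarrow> 1 / (pi^4/90)"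
proof (rule euler_lim)
  show "f4 (m * n) = f4 m * f4 n" for m n by (simp add: f4_def power_mult_distrib)
qed (use infsum_pos_sums[OF f4_sums f4_summable] f4_summable in \<open>auto simp: f4_def\<close>)
lemma limB: "(\<lambda>N. \<Prod>p\<in>Pr N. 1 - fc p) \<longlonglongrightarrow> 1 / catalan"
proof (rule euler_lim)
  show "fc (m * n) = fc m * fc n" for m n by (simp add: fc_def chi4_mult power_mult_distrib)
  show "fc 1 = 1" by (simp add: fc_def chi4_def)
qed (use fc_infsum fc_summable catalan_pos in auto)

lemma prime_mod4: "prime (p::nat) \<Longrightarrow> p \<noteq> 2 \<Longrightarrow> p mod 4 = 1 \<or> p mod 4 = 3"
proof -
  assume p: "prime p" "p \<noteq> 2"
  hence "p > 2" using prime_ge_2_nat[of p] by linarith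
  hence "odd p" using p prime_odd_nat by blast
  thus ?thesis by presburger
qed

definition g3 :: "nat \<Rightarrow> real" where
  "g3 p = (if p mod 4 = 3 then (real p ^ 2 - 1) / (real p ^ 2 + 1) else 1)"
definition g1 :: "nat \<Rightarrow> real" where
  "g1 p = (if p mod 4 = 1 then (real p ^ 2 + 1) / (real p ^ 2 - 1) else 1)"

lemma prod_filter_primes:
  "(\<Prod>i\<in>{..N}. if prime i then g i else 1) = (\<Prod>p\<in>Pr N. (g p :: real))"
proof -
  have a: "Pr N = {x \<in> {..N}. prime x}" by auto
  have b: "prod g {x \<in> {..N}. prime x} = (\<Prod>x\<in>{..N}. if prime x then g x else 1)"
    by (rule prod.inter_filter) simp
  show ?thesis unfolding a b ..
qed

lemma alg_e: "y \<noteq> 0 \<Longrightarrow> 1 - 1 / (y::real) = (y - 1) / y" "y \<noteq> 0 \<Longrightarrow> 1 + 1 / (y::real) = (y + 1) / y"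
  "y \<noteq> 0 \<Longrightarrow> 1 - 1 / (y::real)^2 = (y - 1) * (y + 1) / y^2"
  by (auto simp: field_simps power2_eq_square)

lemma alg3: "(y::real) \<ge> 4 \<Longrightarrow> (1 - 1/y)/(1 + 1/y) = (y-1)/(y+1)"
  by (simp add: alg_e)
lemma alg1a:
  assumes "(y::real) \<ge> 4" shows "(1 - 1/y^2)/((1-1/y)*(1-1/y)) = (y+1)/(y-1)"
proof -
  have y0: "y \<noteq> 0" and y1: "y - 1 \<noteq> 0" using assms by auto
  have "1/y < 1" using assms by simp
  hence d1: "(1-1/y)*(1-1/y) \<noteq> 0" using y1 by simp
  show ?thesis
    by (subst frac_eq_eq[OF d1 y1]) (use y0 in \<open>simp add: field_simps power2_eq_square\<close>)
qed
lemma alg1b: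
  assumes "(y::real) \<ge> 4" shows "(1 - 1/y^2)/((1-1/y)*(1+1/y)) = 1"
proof -
  have y0: "y \<noteq> 0" using assms by auto
  have a: "1/y < 1" "0 < 1/y" using assms by auto
  have "1 + 1/y > 0" using a by linarith
  moreover have "1 - 1/y > 0" using a by linarith
  ultimately have d1: "(1-1/y)*(1+1/y) \<noteq> 0" by (metis mult_pos_pos less_irrefl)
  show ?thesis
    by (subst divide_eq_1_iff) (use d1 y0 in \<open>simp add: field_simps power2_eq_square\<close>)
qed
lemma alg1c: "(y::real) \<ge> 4 \<Longrightarrow> (1 - 1/y)/(1 - 1/y) = 1"
  by (simp add: alg_e)

lemma ratio3:
  assumes "prime p"
  shows "(1 - f2 p) / (1 - fc p) = (if p = 2 then 3/4 else 1) * g3 p"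
proof -
  have p2: "real p \<ge> 2" using prime_ge_2_nat[OF assms] by simp
  have pp: "real p ^ 2 \<ge> 4" using power_mono[OF p2, of 2] by simp
  show ?thesis
  proof (cases "p = 2")
    case True thus ?thesis by (simp add: f2_def fc_def chi4_def g3_def)
  next
    case False
    from prime_mod4[OF assms False] show ?thesis
    proof
      assume m: "p mod 4 = 1"
      thus ?thesis using m False alg1c[OF pp] by (simp add: f2_def fc_def chi4_def g3_def)
    next
      assume m: "p mod 4 = 3"
      thus ?thesis using m False alg3[OF pp] by (simp add: f2_def fc_def chi4_def g3_def)
    qed
  qed
qed

lemma ratio1:
  assumes "prime p"
  shows "(1 - f4 p) / ((1 - f2 p) * (1 - fc p)) = (if p = 2 then 5/4 else 1) * g1 p"
proof -
  have p2: "real p \<ge> 2" using prime_ge_2_nat[OF assms] by simp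
  have pp: "real p ^ 2 \<ge> 4" using power_mono[OF p2, of 2] by simp
  have p4: "real p ^ 4 \<ge> 16" using power_mono[OF p2, of 4] by simp
  hence p4': "real p ^ 4 \<noteq> 1" by linarith
  show ?thesis
  proof (cases "p = 2")
    case True thus ?thesis by (simp add: f2_def f4_def fc_def chi4_def g1_def)
  next
    case False
    from prime_mod4[OF assms False] show ?thesis
    proof
      assume m: "p mod 4 = 1"
      thus ?thesis using m False alg1a[OF pp] by (simp add: f2_def f4_def fc_def chi4_def g1_def)
    next
      assume m: "p mod 4 = 3"
      thus ?thesis using m False alg1b[OF pp] p4' by (simp add: f2_def f4_def fc_def chi4_def g1_def)
    qed
  qed
qed

lemma prod_two:
  assumes "N \<ge> 2"
  shows "(\<Prod>p\<in>Pr N. (if p = 2 then c else 1) * g p) = c * (\<Prod>p\<in>Pr N. (g p :: real))"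
proof -
  have "2 \<in> Pr N" using assms by auto
  have fin: "finite (Pr N)" by auto
  have "(\<Prod>p\<in>Pr N. (if p = 2 then c else 1) * g p) = (\<Prod>p\<in>Pr N. (if p = 2 then c else 1)) * (\<Prod>p\<in>Pr N. g p)"
    by (rule prod.distrib)
  also have "(\<Prod>p\<in>Pr N. (if p = 2 then c else 1)) = c"
    using prod.delta[OF fin, of 2 "\<lambda>_. c"] \<open>2 \<in> Pr N\<close> by simp
  finally show ?thesis by simp
qed

lemma lim3: "(\<lambda>N. \<Prod>p\<in>Pr N. g3 p) \<longlonglongrightarrow> 8 * catalan / pi^2"
proof -
  have "(\<lambda>N. (4/3) * ((\<Prod>p\<in>Pr N. 1 - f2 p) / (\<Prod>p\<in>Pr N. 1 - fc p))) \<longlonglongrightarrow> (4/3) * ((1 / (pi^2/6)) / (1 / catalan))"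
    using catalan_pos by (intro tendsto_intros limA limB) simp
  moreover have "(4/3) * ((1 / (pi^2/6)) / (1 / catalan)) = 8 * catalan / pi^2" by simp
  moreover have "eventually (\<lambda>N. (4/3) * ((\<Prod>p\<in>Pr N. 1 - f2 p) / (\<Prod>p\<in>Pr N. 1 - fc p)) = (\<Prod>p\<in>Pr N. g3 p)) sequentially"
    unfolding eventually_sequentially
  proof (intro exI allI impI)
    fix N :: nat assume N: "N \<ge> 2"
    have "(\<Prod>p\<in>Pr N. 1 - f2 p) / (\<Prod>p\<in>Pr N. 1 - fc p) = (\<Prod>p\<in>Pr N. (1 - f2 p) / (1 - fc p))"
      by (rule prod_dividef[symmetric])
    also have "\<dots> = (\<Prod>p\<in>Pr N. (if p = 2 then 3/4 else 1) * g3 p)"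
      by (intro prod.cong refl) (simp add: ratio3)
    also have "\<dots> = 3/4 * (\<Prod>p\<in>Pr N. g3 p)"
      by (rule prod_two[OF N])
    finally have eq: "(\<Prod>p\<in>Pr N. 1 - f2 p) / (\<Prod>p\<in>Pr N. 1 - fc p) = 3/4 * (\<Prod>p\<in>Pr N. g3 p)" .
    show "(4/3) * ((\<Prod>p\<in>Pr N. 1 - f2 p) / (\<Prod>p\<in>Pr N. 1 - fc p)) = (\<Prod>p\<in>Pr N. g3 p)" unfolding eq by simp
  qed
  ultimately show ?thesis by (simp add: tendsto_cong)
qed

lemma lim1: "(\<lambda>N. \<Prod>p\<in>Pr N. g1 p) \<longlonglongrightarrow> 12 * catalan / pi^2"
proof -
  have "(\<lambda>N. (4/5) * ((\<Prod>p\<in>Pr N. 1 - f4 p) / ((\<Prod>p\<in>Pr N. 1 - f2 p) * (\<Prod>p\<in>Pr N. 1 - fc p)))) \<longlonglongrightarrow> (4/5) * ((1 / (pi^4/90)) / ((1 / (pi^2/6)) * (1 / catalan)))"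
    using catalan_pos by (intro tendsto_intros limA limB limC) simp
  moreover have "(4/5) * ((1 / (pi^4/90)) / ((1 / (pi^2/6)) * (1 / catalan))) = 12 * catalan / pi^2"
    by (simp add: field_simps power2_eq_square power4_eq_xxxx)
  moreover have "eventually (\<lambda>N. (4/5) * ((\<Prod>p\<in>Pr N. 1 - f4 p) / ((\<Prod>p\<in>Pr N. 1 - f2 p) * (\<Prod>p\<in>Pr N. 1 - fc p))) = (\<Prod>p\<in>Pr N. g1 p)) sequentially"
    unfolding eventually_sequentially
  proof (intro exI allI impI)
    fix N :: nat assume N: "N \<ge> 2"
    have "(\<Prod>p\<in>Pr N. 1 - f4 p) / ((\<Prod>p\<in>Pr N. 1 - f2 p) * (\<Prod>p\<in>Pr N. 1 - fc p)) = (\<Prod>p\<in>Pr N. (1 - f4 p) / ((1 - f2 p) * (1 - fc p)))"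
      by (simp add: prod_dividef prod.distrib)
    also have "\<dots> = (\<Prod>p\<in>Pr N. (if p = 2 then 5/4 else 1) * g1 p)"
      by (intro prod.cong refl) (simp add: ratio1)
    also have "\<dots> = 5/4 * (\<Prod>p\<in>Pr N. g1 p)"
      by (rule prod_two[OF N])
    finally have eq: "(\<Prod>p\<in>Pr N. 1 - f4 p) / ((\<Prod>p\<in>Pr N. 1 - f2 p) * (\<Prod>p\<in>Pr N. 1 - fc p)) = 5/4 * (\<Prod>p\<in>Pr N. g1 p)" .
    show "(4/5) * ((\<Prod>p\<in>Pr N. 1 - f4 p) / ((\<Prod>p\<in>Pr N. 1 - f2 p) * (\<Prod>p\<in>Pr N. 1 - fc p))) = (\<Prod>p\<in>Pr N. g1 p)" unfolding eq by simp
  qed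
  ultimately show ?thesis by (simp add: tendsto_cong)
qed

lemma prod_lim_conv:
  fixes f :: "nat \<Rightarrow> real"
  assumes nz: "\<And>i. f i \<noteq> 0" and lim: "(\<lambda>n. prod f {..n}) \<longlonglongrightarrow> L" and L: "L \<noteq> 0"
  shows "convergent_prod f \<and> prodinf f = L"
proof
  show c: "convergent_prod f" using nz lim L by (subst convergent_prod_iff_nz_lim) auto
  show "prodinf f = L" using LIMSEQ_unique[OF convergent_prod_LIMSEQ[OF c] lim] .
qed

theorem proposition7:
  defines "f3 \<equiv> (\<lambda>p::nat. if prime p \<and> p mod 4 = 3
                 then (real p ^ 2 - 1) / (real p ^ 2 + 1) else 1)"
      and "f1 \<equiv> (\<lambda>p::nat. if prime p \<and> p mod 4 = 1
                 then (real p ^ 2 + 1) / (real p ^ 2 - 1) else 1)"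
      and "S \<equiv> (\<lambda>k::nat. (-1) ^ k / fact k * (stieltjes k (1/4) - stieltjes k (3/4)))"
  shows "convergent_prod f3 \<and> summable S \<and>
         catalan = pi ^ 2 / 8 * prodinf f3 \<and>
         complex_of_real catalan = 1 / 16 * suminf S \<and>
         convergent_prod f1 \<and>
         prodinf f1 = 12 / pi ^ 2 * catalan \<and>
         complex_of_real (12 / pi ^ 2 * catalan) = 3 / (4 * complex_of_real pi ^ 2) * suminf S"
proof -
  have f3g: "prod f3 {..n} = (\<Prod>p\<in>Pr n. g3 p)" for n
    unfolding f3_def prod_filter_primes[symmetric] by (intro prod.cong refl) (auto simp: g3_def)
  have f1g: "prod f1 {..n} = (\<Prod>p\<in>Pr n. g1 p)" for n
    unfolding f1_def prod_filter_primes[symmetric] by (intro prod.cong refl) (auto simp: g1_def)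
  have nz3: "f3 i \<noteq> 0" for i
  proof -
    have "real i ^ 2 \<ge> 4" if "prime i" using power_mono[of 2 "real i" 2] prime_ge_2_nat[OF that] by simp
    thus ?thesis unfolding f3_def by auto
  qed
  have nz1: "f1 i \<noteq> 0" for i
  proof -
    have "real i ^ 2 \<ge> 4" if "prime i" using power_mono[of 2 "real i" 2] prime_ge_2_nat[OF that] by simp
    thus ?thesis unfolding f1_def by auto
  qed
  have P3: "convergent_prod f3 \<and> prodinf f3 = 8 * catalan / pi^2"
    using prod_lim_conv[OF nz3, where L = "8 * catalan / pi^2"] lim3 catalan_pos by (simp add: f3g)
  have P1: "convergent_prod f1 \<and> prodinf f1 = 12 * catalan / pi^2"
    using prod_lim_conv[OF nz1, where L = "12 * catalan / pi^2"] lim1 catalan_pos by (simp add: f1g)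
  have SS: "S sums (16 * complex_of_real catalan)" unfolding S_def by (rule stieltjes_part)
  hence sumS: "suminf S = 16 * complex_of_real catalan" by (rule sums_unique[symmetric])
  show ?thesis
  proof (intro conjI)
    show "convergent_prod f3" "convergent_prod f1" using P3 P1 by auto
    show "summable S" using SS by (rule sums_summable)
    show "catalan = pi ^ 2 / 8 * prodinf f3" using P3 by simp
    show "complex_of_real catalan = 1 / 16 * suminf S" using sumS by simp
    show "prodinf f1 = 12 / pi ^ 2 * catalan" using P1 by simp
    show "complex_of_real (12 / pi ^ 2 * catalan) = 3 / (4 * complex_of_real pi ^ 2) * suminf S"
      using sumS by (simp add: field_simps)
  qed
qed

end
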